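(* Let $X$ be a finite connected poset, $F$ a field and $\varphi$ a Jordan automorphism of $I(X,F)$. Then there exist an invertible $\beta\in I(X,F)$ and a bijection $\lambda:X\to X$ such that $\varphi(e_x)=\beta e_{\lambda(x)}\beta^{-1}$ for all $x\in X$.
   Context: $I(X,F)$ is the incidence algebra of the locally finite poset $X$ over $F$ (functions $f:X\times X\to F$ vanishing unless $x\le y$, with product $(fg)(x,y)=\sum_{x\le z\le y}f(x,z)g(z,y)$). For $x\le y$, $e_{xy}$ is the function equal to $1$ at $(x,y)$ and $0$ elsewhere, and $e_x:=e_{xx}$. A poset is connected if any two elements are joined by a finite sequence of elements in which consecutive elements are comparable. A Jordan automorphism of an associative algebra $A$ is a bijective linear map $\varphi:A\to A$ with $\varphi(a^2)=\varphi(a)^2$ and $\varphi(aba)=\varphi(a)\varphi(b)\varphi(a)$ for all $a,b\in A$. *)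

theory Defs
  imports Main
begin

text \<open>The poset X is the (finite) type 'a with its order; F is the field 'b.
  Elements of I(X,F) are functions f :: 'a => 'a => 'b vanishing unless x <= y.\<close>

definition incidence_algebra :: "('a::order \<Rightarrow> 'a \<Rightarrow> 'b::field) set" where
  "incidence_algebra = {f. \<forall>x y. \<not> x \<le> y \<longrightarrow> f x y = 0}"

definition inc_mult :: "('a::{order,finite} \<Rightarrow> 'a \<Rightarrow> 'b::field) \<Rightarrow> ('a \<Rightarrow> 'a \<Rightarrow> 'b) \<Rightarrow> ('a \<Rightarrow> 'a \<Rightarrow> 'b)" where
  "inc_mult f g = (\<lambda>x y. \<Sum>z\<in>{z. x \<le> z \<and> z \<le> y}. f x z * g z y)"

definition inc_add :: "('a \<Rightarrow> 'a \<Rightarrow> 'b::field) \<Rightarrow> ('a \<Rightarrow> 'a \<Rightarrow> 'b) \<Rightarrow> ('a \<Rightarrow> 'a \<Rightarrow> 'b)" where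
  "inc_add f g = (\<lambda>x y. f x y + g x y)"

definition inc_smult :: "'b::field \<Rightarrow> ('a \<Rightarrow> 'a \<Rightarrow> 'b) \<Rightarrow> ('a \<Rightarrow> 'a \<Rightarrow> 'b)" where
  "inc_smult c f = (\<lambda>x y. c * f x y)"

definition inc_one :: "'a \<Rightarrow> 'a \<Rightarrow> 'b::field" where
  "inc_one = (\<lambda>x y. if x = y then 1 else 0)"

text \<open>e_{xy}, and e_x = e_{xx}.\<close>
definition inc_e :: "'a \<Rightarrow> 'a \<Rightarrow> ('a \<Rightarrow> 'a \<Rightarrow> 'b::field)" where
  "inc_e u v = (\<lambda>x y. if x = u \<and> y = v then 1 else 0)"

definition inc_invertible :: "('a::{order,finite} \<Rightarrow> 'a \<Rightarrow> 'b::field) \<Rightarrow> bool" where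
  "inc_invertible b \<longleftrightarrow> b \<in> incidence_algebra \<and>
     (\<exists>c \<in> incidence_algebra. inc_mult b c = inc_one \<and> inc_mult c b = inc_one)"

definition inc_inverse :: "('a::{order,finite} \<Rightarrow> 'a \<Rightarrow> 'b::field) \<Rightarrow> ('a \<Rightarrow> 'a \<Rightarrow> 'b)" where
  "inc_inverse b = (SOME c. c \<in> incidence_algebra \<and> inc_mult b c = inc_one \<and> inc_mult c b = inc_one)"

definition connected_poset :: "'a::order itself \<Rightarrow> bool" where
  "connected_poset _ \<longleftrightarrow> (\<forall>x y::'a. (\<lambda>a b. a \<le> b \<or> b \<le> a)\<^sup>*\<^sup>* x y)"

definition jordan_automorphism ::
  "(('a::{order,finite} \<Rightarrow> 'a \<Rightarrow> 'b::field) \<Rightarrow> ('a \<Rightarrow> 'a \<Rightarrow> 'b)) \<Rightarrow> bool" where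
  "jordan_automorphism \<phi> \<longleftrightarrow>
     bij_betw \<phi> incidence_algebra incidence_algebra \<and>
     (\<forall>a\<in>incidence_algebra. \<forall>b\<in>incidence_algebra. \<forall>c.
        \<phi> (inc_add (inc_smult c a) b) = inc_add (inc_smult c (\<phi> a)) (\<phi> b)) \<and>
     (\<forall>a\<in>incidence_algebra. \<phi> (inc_mult a a) = inc_mult (\<phi> a) (\<phi> a)) \<and>
     (\<forall>a\<in>incidence_algebra. \<forall>b\<in>incidence_algebra.
        \<phi> (inc_mult (inc_mult a b) a) = inc_mult (inc_mult (\<phi> a) (\<phi> b)) (\<phi> a))"

end

theory Submission
  imports Defs "HOL-Library.Function_Algebras"
begin

lemma inc_add_eq: "inc_add f g = f + g"
  by (auto simp: inc_add_def fun_eq_iff)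

lemma sum_fun2: "(\<Sum>i\<in>A. (f i :: 'a \<Rightarrow> 'c \<Rightarrow> 'b::comm_monoid_add)) x y = (\<Sum>i\<in>A. f i x y)"
  by (induction A rule: infinite_finite_induct) auto

lemma inc_mult_assoc:
  "inc_mult (inc_mult f g) h = inc_mult f (inc_mult g (h::'a::{order,finite} \<Rightarrow> 'a \<Rightarrow> 'b::field))"
proof (rule ext, rule ext)
  fix x y :: 'a
  have "inc_mult (inc_mult f g) h x y = (\<Sum>z\<in>{z. x \<le> z \<and> z \<le> y}. \<Sum>w\<in>{w. x \<le> w \<and> w \<le> z}. f x w * g w z * h z y)"
    by (simp add: inc_mult_def sum_distrib_right)
  also have "\<dots> = (\<Sum>(z,w)\<in>{(z,w). x \<le> w \<and> w \<le> z \<and> z \<le> y}. f x w * g w z * h z y)"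
    by (subst sum.Sigma) (auto intro!: sum.cong dest: order_trans)
  also have "\<dots> = (\<Sum>(w,z)\<in>{(w,z). x \<le> w \<and> w \<le> z \<and> z \<le> y}. f x w * g w z * h z y)"
    by (rule sum.reindex_bij_witness[where i="\<lambda>(a,b). (b,a)" and j="\<lambda>(a,b). (b,a)"]) auto
  also have "\<dots> = (\<Sum>w\<in>{w. x \<le> w \<and> w \<le> y}. \<Sum>z\<in>{z. w \<le> z \<and> z \<le> y}. f x w * g w z * h z y)"
    by (subst sum.Sigma) (auto intro!: sum.cong dest: order_trans)
  also have "\<dots> = inc_mult f (inc_mult g h) x y"
    by (simp add: inc_mult_def sum_distrib_left mult.assoc)
  finally show "inc_mult (inc_mult f g) h x y = inc_mult f (inc_mult g h) x y" .
qed

lemma inc_mult_add_left: "inc_mult (f + g) h = inc_mult f h + inc_mult g h"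
  by (auto simp: inc_mult_def fun_eq_iff distrib_right sum.distrib)

lemma inc_mult_add_right: "inc_mult h (f + g) = inc_mult h f + inc_mult h g"
  by (auto simp: inc_mult_def fun_eq_iff distrib_left sum.distrib)

lemma inc_mult_sum_left: "inc_mult (\<Sum>i\<in>A. f i) h = (\<Sum>i\<in>A. inc_mult (f i) h)"
  by (auto simp: inc_mult_def fun_eq_iff sum_fun2 sum_distrib_right intro: sum.swap)

lemma inc_mult_sum_right: "inc_mult h (\<Sum>i\<in>A. f i) = (\<Sum>i\<in>A. inc_mult h (f i))"
  by (auto simp: inc_mult_def fun_eq_iff sum_fun2 sum_distrib_left intro: sum.swap)

lemma sum_interval_delta: "(\<Sum>z\<in>{z. x \<le> z \<and> z \<le> y}. if z = w then g z else 0) = (if x \<le> w \<and> w \<le> y then g w else (0::'b::comm_monoid_add))"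
  for x y w :: "'a::{order,finite}"
  by (subst sum.delta) auto

lemma inc_mult_zero[simp]: "inc_mult 0 h = 0" "inc_mult h 0 = 0"
  by (auto simp: inc_mult_def fun_eq_iff)

lemma inc_mult_one_left: "f \<in> incidence_algebra \<Longrightarrow> inc_mult inc_one f = f"
proof -
  assume f: "f \<in> incidence_algebra"
  { fix x y :: 'a
    have "inc_mult inc_one f x y = (\<Sum>z\<in>{z. x \<le> z \<and> z \<le> y}. if z = x then f z y else 0)"
      unfolding inc_mult_def inc_one_def by (rule sum.cong) auto
    also have "\<dots> = f x y" using f by (simp add: sum_interval_delta incidence_algebra_def)
    finally have "inc_mult inc_one f x y = f x y" . }
  then show ?thesis by (auto simp: fun_eq_iff)
qed

lemma inc_mult_one_right: "f \<in> incidence_algebra \<Longrightarrow> inc_mult f inc_one = f"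
proof -
  assume f: "f \<in> incidence_algebra"
  { fix x y :: 'a
    have "inc_mult f inc_one x y = (\<Sum>z\<in>{z. x \<le> z \<and> z \<le> y}. if z = y then f x z else 0)"
      unfolding inc_mult_def inc_one_def by (rule sum.cong) auto
    also have "\<dots> = f x y" using f by (simp add: sum_interval_delta incidence_algebra_def)
    finally have "inc_mult f inc_one x y = f x y" . }
  then show ?thesis by (auto simp: fun_eq_iff)
qed

lemma inc_mult_diag: "inc_mult f g x x = f x x * g x x"
proof -
  have "{z. x \<le> z \<and> z \<le> x} = {x}" by (auto intro: antisym)
  then show ?thesis by (simp add: inc_mult_def)
qed

lemma inc_mult_in: "inc_mult f g \<in> incidence_algebra"
  unfolding incidence_algebra_def inc_mult_def
  by (auto intro!: sum.neutral dest: order_trans)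

lemma inc_add_in: "f \<in> incidence_algebra \<Longrightarrow> g \<in> incidence_algebra \<Longrightarrow> f + g \<in> incidence_algebra"
  by (auto simp: incidence_algebra_def)

lemma inc_sum_in: "(\<And>i. i \<in> A \<Longrightarrow> f i \<in> incidence_algebra) \<Longrightarrow> (\<Sum>i\<in>A. f i) \<in> incidence_algebra"
  by (induction A rule: infinite_finite_induct) (auto simp: incidence_algebra_def)

lemma inc_zero_in: "0 \<in> incidence_algebra" by (auto simp: incidence_algebra_def)
lemma inc_one_in: "inc_one \<in> incidence_algebra" by (auto simp: incidence_algebra_def inc_one_def)
lemma inc_e_in: "inc_e x x \<in> incidence_algebra" by (auto simp: incidence_algebra_def inc_e_def)

lemma inc_e_mult: "inc_mult (inc_e u u) (inc_e v v) = (if u = v then inc_e u u else 0)"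
proof -
  { fix x y :: 'a
    have "inc_mult (inc_e u u) (inc_e v v) x y = (\<Sum>z\<in>{z. x \<le> z \<and> z \<le> y}. if z = u then (if x = u \<and> y = v \<and> u = v then 1 else 0) else 0)"
      unfolding inc_mult_def inc_e_def by (rule sum.cong) auto
    also have "\<dots> = (if u = v then inc_e u u else 0) x y"
      by (simp add: sum_interval_delta inc_e_def)
    finally have "inc_mult (inc_e u u) (inc_e v v) x y = (if u = v then inc_e u u else 0) x y" . }
  then show ?thesis by (auto simp: fun_eq_iff)
qed

lemma inc_e_sandwich: "inc_mult (inc_mult (inc_e u u) f) (inc_e u u) = (\<lambda>x y. f u u * inc_e u u x y)"
proof -
  have 1: "inc_mult (inc_e u u) f = (\<lambda>x y. if x = u \<and> u \<le> y then f u y else 0)"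
  proof (intro ext)
    fix x y
    show "inc_mult (inc_e u u) f x y = (if x = u \<and> u \<le> y then f u y else 0)"
    proof -
      have "inc_mult (inc_e u u) f x y = (\<Sum>z\<in>{z. x \<le> z \<and> z \<le> y}. if z = u then (if x = u then f z y else 0) else 0)"
        unfolding inc_mult_def inc_e_def by (rule sum.cong) auto
      then show ?thesis by (simp add: sum_interval_delta)
    qed
  qed
  show ?thesis
  proof (intro ext)
    fix x y
    have "inc_mult (\<lambda>x y. if x = u \<and> u \<le> y then f u y else 0) (inc_e u u) x y
       = (\<Sum>z\<in>{z. x \<le> z \<and> z \<le> y}. if z = u then (if x = u \<and> y = u then f u u else 0) else 0)"
      unfolding inc_mult_def inc_e_def by (rule sum.cong) auto
    also have "\<dots> = f u u * inc_e u u x y" by (simp add: sum_interval_delta inc_e_def)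
    finally show "inc_mult (inc_mult (inc_e u u) f) (inc_e u u) x y = f u u * inc_e u u x y"
      by (simp add: 1)
  qed
qed

lemma idem_offdiag_zero:
  fixes a :: "'a::{order,finite} \<Rightarrow> 'a \<Rightarrow> 'b::field"
  assumes idem: "inc_mult a a = a" and cond: "\<And>x y. x < y \<Longrightarrow> a x x + a y y \<noteq> 1"
  shows "x < y \<Longrightarrow> a x y = 0"
proof (induction "card {z. x \<le> z \<and> z \<le> y}" arbitrary: x y rule: less_induct)
  case (less x y)
  have split: "{z. x \<le> z \<and> z \<le> y} = insert x (insert y {z. x < z \<and> z < y})"
    using less.prems by auto
  have zero: "(\<Sum>z\<in>{z. x < z \<and> z < y}. a x z * a z y) = 0"
  proof (rule sum.neutral, rule ballI)
    fix z assume z: "z \<in> {z. x < z \<and> z < y}"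
    have sub: "{w. x \<le> w \<and> w \<le> z} \<subseteq> {w. x \<le> w \<and> w \<le> y}"
      using z by (auto intro: order_trans less_imp_le)
    have "y \<notin> {w. x \<le> w \<and> w \<le> z}" using z by auto
    moreover have "y \<in> {w. x \<le> w \<and> w \<le> y}" using less.prems by auto
    ultimately have "{w. x \<le> w \<and> w \<le> z} \<subset> {w. x \<le> w \<and> w \<le> y}" using sub by blast
    then have "card {w. x \<le> w \<and> w \<le> z} < card {w. x \<le> w \<and> w \<le> y}"
      by (rule psubset_card_mono[rotated]) simp
    then have "a x z = 0" using less.hyps z by auto
    then show "a x z * a z y = 0" by simp
  qed
  have "a x y = inc_mult a a x y" using idem by simp
  also have "\<dots> = a x x * a x y + (a x y * a y y + (\<Sum>z\<in>{z. x < z \<and> z < y}. a x z * a z y))"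
    unfolding inc_mult_def split using less.prems by (simp add: sum.insert_remove)
  also have "\<dots> = (a x x + a y y) * a x y" using zero by (simp add: algebra_simps)
  finally have "(1 - (a x x + a y y)) * a x y = 0" by (simp add: algebra_simps)
  then show ?case using cond[OF less.prems] by simp
qed

lemma conj_system:
  fixes P :: "'a::{order,finite} \<Rightarrow> 'a \<Rightarrow> 'a \<Rightarrow> 'b::field"
  assumes PI: "\<And>x. P x \<in> incidence_algebra"
    and idem: "\<And>x. inc_mult (P x) (P x) = P x"
    and orth: "\<And>x y. x \<noteq> y \<Longrightarrow> inc_mult (P x) (P y) = 0"
    and sum1: "(\<Sum>x\<in>UNIV. P x) = inc_one"
    and nz: "\<And>x. P x \<noteq> 0"
  shows "\<exists>\<beta> lam. inc_invertible \<beta> \<and> bij lam \<and>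
           (\<forall>x. P x = inc_mult (inc_mult \<beta> (inc_e (lam x) (lam x))) (inc_inverse \<beta>))"
proof -
  have D01: "P x y y = 0 \<or> P x y y = 1" for x y
  proof -
    have "P x y y * P x y y = P x y y" using idem[of x] inc_mult_diag[of "P x" "P x" y] by simp
    then have "P x y y * (P x y y - 1) = 0" by (simp add: algebra_simps)
    then show ?thesis by simp
  qed
  have Dorth: "x \<noteq> x' \<Longrightarrow> P x y y * P x' y y = 0" for x x' y
    using orth[of x x'] inc_mult_diag[of "P x" "P x'" y] by simp
  have Dsum: "(\<Sum>x\<in>UNIV. P x y y) = 1" for y
    using fun_cong[OF fun_cong[OF sum1, of y], of y] by (simp add: sum_fun2 inc_one_def)
  have ex1: "\<exists>!x. P x y y = 1" for y
  proof -
    have "\<exists>x. P x y y = 1"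
    proof (rule ccontr)
      assume "\<not> ?thesis"
      then have "\<forall>x. P x y y = 0" using D01 by blast
      then show False using Dsum[of y] by simp
    qed
    moreover have "P x y y = 1 \<Longrightarrow> P x' y y = 1 \<Longrightarrow> x = x'" for x x'
      using Dorth[of x x' y] by (cases "x = x'") auto
    ultimately show ?thesis by blast
  qed
  define \<sigma> where "\<sigma> y = (THE x. P x y y = 1)" for y
  have sig1: "P (\<sigma> y) y y = 1" for y unfolding \<sigma>_def using theI'[OF ex1[of y]] .
  have Dsig: "P x y y = (if x = \<sigma> y then 1 else 0)" for x y
    using D01[of x y] ex1[of y] sig1[of y] by auto
  have surj: "surj \<sigma>"
  proof -
    { fix x
      assume no: "\<forall>y. \<sigma> y \<noteq> x"
      then have diag0: "P x y y = 0" for y using Dsig[of x y] by auto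
      have "P x = 0"
      proof (intro ext)
        fix y z
        show "P x y z = 0 y z"
        proof (cases "y < z")
          case True
          show ?thesis using idem_offdiag_zero[of "P x", OF idem] True diag0 by simp
        next
          case False
          then have "y = z \<or> \<not> y \<le> z" by auto
          then show ?thesis using diag0 PI[of x] by (auto simp: incidence_algebra_def)
        qed
      qed
      with nz have False by simp }
    then show ?thesis by (metis surjI)
  qed
  have inj: "inj \<sigma>" using finite_UNIV_surj_inj[OF finite_UNIV surj] .
  define lam where "lam = inv \<sigma>"
  have bijl: "bij lam" unfolding lam_def using bij_imp_bij_inv inj surj bij_def by blast
  have sl: "\<sigma> (lam x) = x" for x unfolding lam_def using surj_f_inv_f[OF surj] .
  have ls: "lam (\<sigma> y) = y" for y unfolding lam_def using inv_f_f[OF inj] .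
  define \<beta> where "\<beta> = (\<Sum>y\<in>UNIV. inc_mult (P (\<sigma> y)) (inc_e y y))"
  define \<gamma> where "\<gamma> = (\<Sum>y\<in>UNIV. inc_mult (inc_e y y) (P (\<sigma> y)))"
  have bI: "\<beta> \<in> incidence_algebra" unfolding \<beta>_def by (intro inc_sum_in inc_mult_in)
  have gI: "\<gamma> \<in> incidence_algebra" unfolding \<gamma>_def by (intro inc_sum_in inc_mult_in)
  have bdiag: "\<beta> x x = 1" for x
  proof -
    have "\<beta> x x = (\<Sum>y\<in>UNIV. if y = x then P (\<sigma> y) x x else 0)"
      unfolding \<beta>_def sum_fun2 inc_mult_diag by (rule sum.cong) (auto simp: inc_e_def)
    also have "\<dots> = 1" using sig1 by simp
    finally show ?thesis .
  qed
  have gdiag: "\<gamma> x x = 1" for x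
  proof -
    have "\<gamma> x x = (\<Sum>y\<in>UNIV. if y = x then P (\<sigma> y) x x else 0)"
      unfolding \<gamma>_def sum_fun2 inc_mult_diag by (rule sum.cong) (auto simp: inc_e_def)
    also have "\<dots> = 1" using sig1 by simp
    finally show ?thesis .
  qed
  have Pb: "inc_mult (P x) \<beta> = inc_mult (P x) (inc_e (lam x) (lam x))" for x
  proof -
    have "inc_mult (P x) \<beta> = (\<Sum>y\<in>UNIV. inc_mult (inc_mult (P x) (P (\<sigma> y))) (inc_e y y))"
      unfolding \<beta>_def inc_mult_sum_right inc_mult_assoc ..
    also have "\<dots> = (\<Sum>y\<in>UNIV. if y = lam x then inc_mult (P x) (inc_e y y) else 0)"
    proof (rule sum.cong)
      fix y assume "y \<in> (UNIV::'a set)"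
      show "inc_mult (inc_mult (P x) (P (\<sigma> y))) (inc_e y y) = (if y = lam x then inc_mult (P x) (inc_e y y) else 0)"
      proof (cases "y = lam x")
        case True then show ?thesis using sl idem by simp
      next
        case False
        then have "x \<noteq> \<sigma> y" using ls by auto
        then show ?thesis using False orth by simp
      qed
    qed simp
    also have "\<dots> = inc_mult (P x) (inc_e (lam x) (lam x))" by simp
    finally show ?thesis .
  qed
  have bE: "inc_mult \<beta> (inc_e (lam x) (lam x)) = inc_mult (P x) (inc_e (lam x) (lam x))" for x
  proof -
    have "inc_mult \<beta> (inc_e (lam x) (lam x)) = (\<Sum>y\<in>UNIV. inc_mult (P (\<sigma> y)) (inc_mult (inc_e y y) (inc_e (lam x) (lam x))))"
      unfolding \<beta>_def inc_mult_sum_left inc_mult_assoc ..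
    also have "\<dots> = (\<Sum>y\<in>UNIV. if y = lam x then inc_mult (P (\<sigma> y)) (inc_e y y) else 0)"
      by (rule sum.cong) (auto simp: inc_e_mult)
    also have "\<dots> = inc_mult (P x) (inc_e (lam x) (lam x))" using sl by simp
    finally show ?thesis .
  qed
  have gb: "inc_mult \<gamma> \<beta> = inc_one"
  proof -
    have "inc_mult \<gamma> \<beta> = (\<Sum>y\<in>UNIV. inc_mult (inc_e y y) (inc_mult (P (\<sigma> y)) \<beta>))"
      unfolding \<gamma>_def inc_mult_sum_left inc_mult_assoc ..
    also have "\<dots> = (\<Sum>y\<in>UNIV. inc_e y y)"
    proof (rule sum.cong)
      fix y :: 'a
      have "inc_mult (inc_e y y) (inc_mult (P (\<sigma> y)) \<beta>) = inc_mult (inc_mult (inc_e y y) \<beta>) (inc_e y y)"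
        using Pb[of "\<sigma> y"] bE[of "\<sigma> y"] ls by (simp add: inc_mult_assoc)
      also have "\<dots> = inc_e y y" unfolding inc_e_sandwich bdiag by simp
      finally show "inc_mult (inc_e y y) (inc_mult (P (\<sigma> y)) \<beta>) = inc_e y y" .
    qed simp
    also have "\<dots> = inc_one"
    proof (intro ext)
      fix a b :: 'a
      have "(\<Sum>y\<in>UNIV. inc_e y y) a b = (\<Sum>y\<in>UNIV. if y = a then (if a = b then 1 else 0) else 0)"
        unfolding sum_fun2 by (rule sum.cong) (auto simp: inc_e_def)
      also have "\<dots> = inc_one a b" by (simp add: inc_one_def)
      finally show "(\<Sum>y\<in>UNIV. inc_e y y) a b = inc_one a b" .
    qed
    finally show ?thesis .
  qed
  have bg: "inc_mult \<beta> \<gamma> = inc_one"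
  proof -
    let ?a = "inc_mult \<beta> \<gamma>"
    have ai: "inc_mult ?a ?a = ?a"
      by (simp add: inc_mult_assoc[symmetric]) (simp add: inc_mult_assoc gb inc_mult_one_right[OF bI])
    have ad: "?a x x = 1" for x by (simp add: inc_mult_diag bdiag gdiag)
    have c: "?a x x + ?a y y \<noteq> 1" for x y
    proof
      assume "?a x x + ?a y y = 1"
      then have "(1::'b) + 1 = 1 + 0" using ad by simp
      then show False by (metis add_left_cancel one_neq_zero)
    qed
    show ?thesis
    proof (intro ext)
      fix x y
      show "?a x y = inc_one x y"
      proof (cases "x < y")
        case True then show ?thesis using idem_offdiag_zero[of ?a, OF ai c] by (simp add: inc_one_def)
      next
        case False
        then have "x = y \<or> \<not> x \<le> y" by auto
        then show ?thesis using ad inc_mult_in[of \<beta> \<gamma>] by (auto simp: incidence_algebra_def inc_one_def)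
      qed
    qed
  qed
  have inv: "inc_invertible \<beta>" unfolding inc_invertible_def using bI gI bg gb by blast
  have invb: "inc_inverse \<beta> = \<gamma>"
  proof -
    let ?Q = "\<lambda>c. c \<in> incidence_algebra \<and> inc_mult \<beta> c = inc_one \<and> inc_mult c \<beta> = inc_one"
    have "?Q (inc_inverse \<beta>)" unfolding inc_inverse_def by (rule someI[of ?Q \<gamma>]) (use gI bg gb in auto)
    then have c: "inc_inverse \<beta> \<in> incidence_algebra" "inc_mult \<beta> (inc_inverse \<beta>) = inc_one" by auto
    have "inc_inverse \<beta> = inc_mult (inc_mult \<gamma> \<beta>) (inc_inverse \<beta>)" using gb inc_mult_one_left[OF c(1)] by simp
    also have "\<dots> = \<gamma>" by (simp add: inc_mult_assoc c(2) inc_mult_one_right[OF gI])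
    finally show ?thesis .
  qed
  have "P x = inc_mult (inc_mult \<beta> (inc_e (lam x) (lam x))) (inc_inverse \<beta>)" for x
  proof -
    have "P x = inc_mult (P x) (inc_mult \<beta> \<gamma>)" using bg inc_mult_one_right[OF PI] by simp
    also have "\<dots> = inc_mult (inc_mult \<beta> (inc_e (lam x) (lam x))) \<gamma>"
      by (simp add: inc_mult_assoc[symmetric] Pb bE)
    finally show ?thesis using invb by simp
  qed
  then show ?thesis using inv bijl by blast
qed

theorem lemma4p1:
  fixes \<phi> :: "('a::{order,finite} \<Rightarrow> 'a \<Rightarrow> 'b::field) \<Rightarrow> ('a \<Rightarrow> 'a \<Rightarrow> 'b)"
  assumes "connected_poset TYPE('a)"
    and "jordan_automorphism \<phi>"
  shows "\<exists>\<beta> lam. inc_invertible \<beta> \<and> bij lam \<and>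
           (\<forall>x. \<phi> (inc_e x x) = inc_mult (inc_mult \<beta> (inc_e (lam x) (lam x))) (inc_inverse \<beta>))"
proof -
  note J = assms(2)[unfolded jordan_automorphism_def]
  have bij: "bij_betw \<phi> incidence_algebra incidence_algebra" using J by blast
  have lin: "\<And>a b c. a \<in> incidence_algebra \<Longrightarrow> b \<in> incidence_algebra \<Longrightarrow>
      \<phi> (inc_add (inc_smult c a) b) = inc_add (inc_smult c (\<phi> a)) (\<phi> b)" using J by blast
  have sq: "\<And>a. a \<in> incidence_algebra \<Longrightarrow> \<phi> (inc_mult a a) = inc_mult (\<phi> a) (\<phi> a)" using J by blast
  have tr: "\<And>a b. a \<in> incidence_algebra \<Longrightarrow> b \<in> incidence_algebra \<Longrightarrow>
      \<phi> (inc_mult (inc_mult a b) a) = inc_mult (inc_mult (\<phi> a) (\<phi> b)) (\<phi> a)" using J by blast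
  have smult1: "inc_smult 1 a = a" for a :: "'a \<Rightarrow> 'a \<Rightarrow> 'b" by (simp add: inc_smult_def)
  have add: "\<phi> (a + b) = \<phi> a + \<phi> b" if "a \<in> incidence_algebra" "b \<in> incidence_algebra" for a b
    using lin[OF that, of 1] by (simp add: smult1 inc_add_eq)
  have phiI: "\<phi> a \<in> incidence_algebra" if "a \<in> incidence_algebra" for a
    using bij that by (auto simp: bij_betw_def)
  have zero: "\<phi> 0 = 0"
  proof -
    have "\<phi> (inc_add (inc_smult (-1) 0) 0) = inc_add (inc_smult (-1) (\<phi> 0)) (\<phi> 0)"
      using lin[OF inc_zero_in inc_zero_in] .
    moreover have "inc_add (inc_smult (-1) 0) 0 = (0 :: 'a \<Rightarrow> 'a \<Rightarrow> 'b)" by (simp add: inc_add_def inc_smult_def fun_eq_iff)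
    moreover have "inc_add (inc_smult (-1) (\<phi> 0)) (\<phi> 0) = 0" by (simp add: inc_add_def inc_smult_def fun_eq_iff)
    ultimately show ?thesis by simp
  qed
  have sumphi: "\<phi> (\<Sum>x\<in>A. f x) = (\<Sum>x\<in>A. \<phi> (f x))" if "\<And>x. f x \<in> incidence_algebra" "finite A" for A :: "'c set" and f
    using that(2)
  proof (induction A rule: finite_induct)
    case empty then show ?case using zero by (simp only: sum.empty)
  next
    case (insert x F)
    have "\<phi> (sum f (insert x F)) = \<phi> (f x + sum f F)" by (simp only: sum.insert[OF insert(1,2)])
    also have "\<dots> = \<phi> (f x) + \<phi> (sum f F)" by (rule add) (use that(1) in \<open>auto intro: inc_sum_in\<close>)
    also have "\<dots> = (\<Sum>x\<in>insert x F. \<phi> (f x))" by (simp only: insert.IH sum.insert[OF insert(1,2)])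
    finally show ?case .
  qed
  have one: "\<phi> inc_one = inc_one"
  proof -
    obtain b where b: "b \<in> incidence_algebra" "\<phi> b = inc_one"
      using bij inc_one_in by (metis bij_betw_def imageE)
    let ?u = "\<phi> inc_one"
    have uI: "?u \<in> incidence_algebra" using phiI inc_one_in .
    have "\<phi> (inc_mult (inc_mult inc_one b) inc_one) = inc_mult (inc_mult ?u (\<phi> b)) ?u"
      using tr[OF inc_one_in b(1)] .
    then have "inc_one = inc_mult ?u ?u"
      using b inc_mult_one_left[OF b(1)] inc_mult_one_right[OF b(1)] inc_mult_one_right[OF uI] by simp
    moreover have "\<phi> (inc_mult inc_one inc_one) = inc_mult ?u ?u" using sq[OF inc_one_in] .
    ultimately show ?thesis using inc_mult_one_left[OF inc_one_in] by metis
  qed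
  define P where "P x = \<phi> (inc_e x x)" for x
  have PI: "P x \<in> incidence_algebra" for x unfolding P_def by (rule phiI[OF inc_e_in])
  have idem: "inc_mult (P x) (P x) = P x" for x
    unfolding P_def using sq[OF inc_e_in, of x] by (simp add: inc_e_mult)
  have orth: "inc_mult (P x) (P y) = 0" if xy: "x \<noteq> y" for x y
  proof -
    let ?s = "inc_e x x + inc_e y y :: 'a \<Rightarrow> 'a \<Rightarrow> 'b"
    have sI: "?s \<in> incidence_algebra" by (intro inc_add_in inc_e_in)
    have ss: "inc_mult ?s ?s = ?s"
      using xy by (simp add: inc_mult_add_left inc_mult_add_right inc_e_mult)
    have ps: "\<phi> ?s = P x + P y" unfolding P_def by (rule add[OF inc_e_in inc_e_in])
    have "P x + P y = inc_mult (P x + P y) (P x + P y)" using sq[OF sI] ss ps by simp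
    also have "\<dots> = P x + inc_mult (P x) (P y) + inc_mult (P y) (P x) + P y"
      by (simp add: inc_mult_add_left inc_mult_add_right idem algebra_simps)
    finally have s0: "inc_mult (P x) (P y) + inc_mult (P y) (P x) = 0"
      by (simp add: algebra_simps)
    have pqp: "inc_mult (inc_mult (P x) (P y)) (P x) = 0"
      using tr[OF inc_e_in inc_e_in, of x y] xy zero by (simp add: inc_e_mult P_def)
    have "0 = inc_mult (P x) (inc_mult (P x) (P y) + inc_mult (P y) (P x))" using s0 by simp
    also have "\<dots> = inc_mult (P x) (P y)"
      by (simp add: inc_mult_add_right inc_mult_assoc[symmetric] idem pqp)
    finally show ?thesis by simp
  qed
  have esum: "(\<Sum>x\<in>UNIV. inc_e x x) = (inc_one :: 'a \<Rightarrow> 'a \<Rightarrow> 'b)"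
  proof (intro ext)
    fix a b :: 'a
    have "(\<Sum>y\<in>UNIV. inc_e y y :: 'a \<Rightarrow> 'a \<Rightarrow> 'b) a b = (\<Sum>y\<in>UNIV. if y = a then (if a = b then 1 else 0) else (0::'b))"
      unfolding sum_fun2 by (rule sum.cong) (auto simp: inc_e_def)
    also have "\<dots> = inc_one a b" by (simp add: inc_one_def)
    finally show "(\<Sum>y\<in>UNIV. inc_e y y :: 'a \<Rightarrow> 'a \<Rightarrow> 'b) a b = inc_one a b" .
  qed
  have sum1: "(\<Sum>x\<in>UNIV. P x) = inc_one"
    unfolding P_def using sumphi[of "\<lambda>x. inc_e x x" UNIV, OF inc_e_in finite_UNIV] esum one by simp
  have nz: "P x \<noteq> 0" for x
  proof
    assume "P x = 0"
    then have "\<phi> (inc_e x x) = \<phi> 0" using zero P_def by simp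
    then have "inc_e x x = (0 :: 'a \<Rightarrow> 'a \<Rightarrow> 'b)"
      using bij inc_e_in inc_zero_in by (auto simp: bij_betw_def inj_on_def)
    then have "inc_e x x x x = (0::'b)" by simp
    then show False by (simp add: inc_e_def)
  qed
  show ?thesis using conj_system[OF PI idem orth sum1 nz] unfolding P_def .
qed

end
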